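(* Let $G$ be a bipartite graph and let $K:E(G)\to L_n$ be an edge-labeling with permutations from $L_n$. Then $(G,K)$ has no consistent vertex-labeling if and only if $G$ contains a chordless (induced) cycle $C$ such that $(C,K|_{E(C)})$ has no consistent vertex-labeling.
   Context: Labeled graphs: $G$ is a finite simple graph in which each edge is given a fixed orientation; $uv$ denotes the edge oriented from $u$ to $v$. An edge-labeling $K:E(G)\to S_n$ assigns to each edge a permutation of $[n]=\{0,\dots,n-1\}$. A vertex-labeling is a map $k:V(G)\to[n]$. An edge $uv$ with $K(uv)=\pi$ is a contradiction of $k$ if $\pi(k(u))\neq k(v)$. A vertex-labeling is consistent if it has no contradictions. $L_n=\{\pi_0,\dots,\pi_{n-1}\}\subseteq S_n$, where $\pi_i(x)\equiv i-x \pmod n$. Each $\pi_i$ is an involution, so orientation is irrelevant. *)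

theory Defs
  imports Main
begin

text \<open>A finite simple graph with a fixed orientation of each edge:
  vertex set V, set E of oriented edges (u,v), no loops, and no edge present
  in both orientations.\<close>
definition oriented_simple_graph :: "'a set \<Rightarrow> ('a \<times> 'a) set \<Rightarrow> bool" where
  "oriented_simple_graph V E \<longleftrightarrow> finite V \<and> E \<subseteq> V \<times> V \<and>
     (\<forall>u v. (u, v) \<in> E \<longrightarrow> u \<noteq> v \<and> (v, u) \<notin> E)"

definition adj :: "('a \<times> 'a) set \<Rightarrow> 'a \<Rightarrow> 'a \<Rightarrow> bool" where
  "adj E u v \<longleftrightarrow> (u, v) \<in> E \<or> (v, u) \<in> E"

definition bipartite :: "'a set \<Rightarrow> ('a \<times> 'a) set \<Rightarrow> bool" where
  "bipartite V E \<longleftrightarrow> (\<exists>A \<subseteq> V. \<forall>(u, v) \<in> E. (u \<in> A \<longleftrightarrow> v \<notin> A))"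

definition Lperm :: "nat \<Rightarrow> nat \<Rightarrow> nat \<Rightarrow> nat" where
  "Lperm n i x = nat ((int i - int x) mod int n)"

definition Ln :: "nat \<Rightarrow> (nat \<Rightarrow> nat) set" where
  "Ln n = {Lperm n i | i. i < n}"

definition consistent ::
  "'a set \<Rightarrow> ('a \<times> 'a) set \<Rightarrow> ('a \<times> 'a \<Rightarrow> nat \<Rightarrow> nat) \<Rightarrow> nat \<Rightarrow> ('a \<Rightarrow> nat) \<Rightarrow> bool" where
  "consistent V E K n k \<longleftrightarrow> (\<forall>v \<in> V. k v < n) \<and> (\<forall>(u, v) \<in> E. K (u, v) (k u) = k v)"

definition has_consistent ::
  "'a set \<Rightarrow> ('a \<times> 'a) set \<Rightarrow> ('a \<times> 'a \<Rightarrow> nat \<Rightarrow> nat) \<Rightarrow> nat \<Rightarrow> bool" where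
  "has_consistent V E K n \<longleftrightarrow> (\<exists>k. consistent V E K n k)"

definition chordless_cycle :: "'a set \<Rightarrow> ('a \<times> 'a) set \<Rightarrow> 'a list \<Rightarrow> bool" where
  "chordless_cycle V E cs \<longleftrightarrow> length cs \<ge> 3 \<and> distinct cs \<and> set cs \<subseteq> V \<and>
     (\<forall>i < length cs. adj E (cs ! i) (cs ! ((i + 1) mod length cs))) \<and>
     (\<forall>i < length cs. \<forall>j < length cs. adj E (cs ! i) (cs ! j) \<longrightarrow>
         j = (i + 1) mod length cs \<or> i = (j + 1) mod length cs)"

definition cycle_edges :: "('a \<times> 'a) set \<Rightarrow> 'a list \<Rightarrow> ('a \<times> 'a) set" where
  "cycle_edges E cs = {(u, v) \<in> E. \<exists>i < length cs.
       {u, v} = {cs ! i, cs ! ((i + 1) mod length cs)}}"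

end

theory Submission
  imports Defs
begin

fun wsum :: "('a \<Rightarrow> 'a \<Rightarrow> int) \<Rightarrow> 'a list \<Rightarrow> int" where
  "wsum w (a # b # r) = w a b + wsum w (b # r)"
| "wsum w _ = 0"

lemma wsum_append: "wsum w (xs @ y # ys) = wsum w (xs @ [y]) + wsum w (y # ys)"
  by (induction xs rule: induct_list012) auto

lemma wsum_rev:
  assumes "\<And>a b. R a b \<Longrightarrow> w b a = - w a b" "successively R xs"
  shows "wsum w (rev xs) = - wsum w xs"
  using assms(2)
proof (induction xs rule: induct_list012)
  case (3 x y zs)
  have "wsum w (rev (x # y # zs)) = wsum w (rev zs @ [y]) + wsum w [y, x]"
    using wsum_append[of w "rev zs" y "[x]"] by simp
  also have "\<dots> = - wsum w (y # zs) + w y x" using 3 by simp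
  finally show ?case using 3 assms(1) by simp
qed auto

lemma telescope:
  assumes "successively (\<lambda>a b. N dvd (y a - y b - w a b)) xs" "xs \<noteq> []"
  shows "N dvd (wsum w xs - (y (hd xs) - y (last xs)))"
  using assms
proof (induction xs rule: induct_list012)
  case (3 x y' zs)
  then have "N dvd (wsum w (y' # zs) - (y y' - y (last (y' # zs))))"
    "N dvd (y x - y y' - w x y')" by auto
  from dvd_diff[OF this] show ?case by (simp add: algebra_simps)
qed auto

lemma split2:
  assumes "i < j" "j < length xs"
  shows "\<exists>p q r. xs = p @ [xs!i] @ q @ [xs!j] @ r \<and> length p = i \<and> length q = j - Suc i"
proof -
  have 1: "xs = take j xs @ xs!j # drop (Suc j) xs" using assms id_take_nth_drop by blast
  have 2: "take j xs = take i (take j xs) @ (take j xs)!i # drop (Suc i) (take j xs)"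
    using assms id_take_nth_drop[of i "take j xs"] by simp
  have "xs = take i xs @ [xs!i] @ drop (Suc i) (take j xs) @ [xs!j] @ drop (Suc j) xs"
    using 1 2 assms by (metis append.assoc append_Cons append_Nil min_def nth_take take_take order.strict_implies_order)
  then show ?thesis using assms by (intro exI[of _ "take i xs"] exI[of _ "drop (Suc i) (take j xs)"] exI[of _ "drop (Suc j) xs"]) auto
qed

lemma succ_prefix: "successively P (xs @ ys) \<Longrightarrow> successively P xs"
  by (simp add: successively_append_iff)
lemma succ_suffix: "successively P (xs @ ys) \<Longrightarrow> successively P ys"
  by (simp add: successively_append_iff)
lemma succ_join: "successively P (xs @ [v]) \<Longrightarrow> successively P (v # ys) \<Longrightarrow> successively P (xs @ v # ys)"
  using successively_append_iff[of P "xs @ [v]" ys] successively_append_iff[of P "xs" "[v]"]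
  by (cases ys) (auto simp: successively_Cons)

definition chordless :: "('a \<Rightarrow> 'a \<Rightarrow> bool) \<Rightarrow> 'a list \<Rightarrow> bool" where
  "chordless R cs \<longleftrightarrow> (\<forall>i < length cs. \<forall>j < length cs. R (cs ! i) (cs ! j) \<longrightarrow>
         j = (i + 1) mod length cs \<or> i = (j + 1) mod length cs)"

lemma closed_walk_dvd:
  assumes sym: "\<And>a b. R a b \<Longrightarrow> R b a" and irr: "\<And>a. \<not> R a a"
    and anti: "\<And>a b. R a b \<Longrightarrow> w b a = - w a b"
    and H: "\<And>cs. distinct cs \<Longrightarrow> length cs \<ge> 3 \<Longrightarrow> successively R (cs @ [hd cs]) \<Longrightarrow>
              chordless R cs \<Longrightarrow> N dvd wsum w (cs @ [hd cs])"
  shows "successively R xs \<Longrightarrow> xs \<noteq> [] \<Longrightarrow> hd xs = last xs \<Longrightarrow> N dvd wsum w xs"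
proof (induction "length xs" arbitrary: xs rule: less_induct)
  case less
  define cs where "cs = butlast xs"
  show ?case
  proof (cases "cs = []")
    case True
    then have "length xs = 1" using less.prems unfolding cs_def
      by (metis One_nat_def Suc_pred length_butlast length_greater_0_conv list.size(3))
    then obtain a where "xs = [a]" by (metis One_nat_def length_0_conv length_Suc_conv)
    then show ?thesis by simp
  next
    case cne: False
    let ?h = "hd cs"
    have xs_eq: "xs = cs @ [?h]" using less.prems cne unfolding cs_def
      by (metis append_butlast_last_id hd_append2)
    have sc: "successively R (cs @ [?h])" using less.prems(1) xs_eq by metis
    show ?thesis
    proof (cases "distinct cs")
      case False
      then obtain p v q r where cs_eq: "cs = p @ [v] @ q @ [v] @ r"
        using not_distinct_decomp by blast
      define W1 where "W1 = v # q @ [v]"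
      define W2 where "W2 = p @ [v] @ r @ [?h]"
      have xs2: "xs = p @ v # q @ v # r @ [?h]" using xs_eq cs_eq by simp
      have sx: "successively R (p @ v # q @ v # r @ [?h])" using less.prems xs2 by simp
      have s1: "successively R W1" using succ_prefix[of R "v # q @ [v]" "r @ [?h]"] succ_suffix[of R p] sx
        unfolding W1_def by simp
      have "successively R (p @ [v])" using succ_prefix[of R "p @ [v]"] sx by simp
      moreover have "successively R (v # r @ [?h])" using succ_suffix[of R "p @ v # q"] sx by simp
      ultimately have s2: "successively R W2" unfolding W2_def using succ_join by fastforce
      have hW2: "hd W2 = last W2"
      proof (cases p)
        case Nil
        then have "hd cs = v" using cs_eq by simp
        then show ?thesis using Nil unfolding W2_def by simp
      next
        case (Cons a p')
        then have "hd cs = a" using cs_eq by simp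
        then show ?thesis using Cons unfolding W2_def by simp
      qed
      have lx: "length xs = length p + length q + length r + 3" using xs2 by simp
      have l1: "length W1 = length q + 2" unfolding W1_def by simp
      have l2: "length W2 = length p + length r + 2" unfolding W2_def by simp
      have "N dvd wsum w W1"
        by (rule less.hyps) (use lx l1 s1 in \<open>auto simp: W1_def\<close>)
      moreover have "N dvd wsum w W2"
        by (rule less.hyps) (use lx l2 s2 hW2 in \<open>auto simp: W2_def\<close>)
      moreover have "wsum w xs = wsum w W1 + wsum w W2"
      proof -
        have "wsum w xs = wsum w (p @ [v]) + wsum w (v # q @ v # r @ [?h])"
          using xs2 wsum_append[of w p v "q @ v # r @ [?h]"] by simp
        moreover have "wsum w (v # q @ v # r @ [?h]) = wsum w W1 + wsum w (v # r @ [?h])"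
          unfolding W1_def using wsum_append[of w "v # q" v "r @ [?h]"] by simp
        moreover have "wsum w W2 = wsum w (p @ [v]) + wsum w (v # r @ [?h])"
          unfolding W2_def using wsum_append[of w p v "r @ [?h]"] by simp
        ultimately show ?thesis by simp
      qed
      ultimately show ?thesis by simp
    next
      case dist: True
      show ?thesis
      proof (cases "length cs \<ge> 3")
        case False
        then have "length cs = 1 \<or> length cs = 2" using cne False by (metis length_0_conv not_le less_Suc_eq numeral_3_eq_3 numeral_2_eq_2 One_nat_def less_Suc0)
        then show ?thesis
        proof
          assume "length cs = 1"
          then obtain a where "cs = [a]" by (metis One_nat_def length_0_conv length_Suc_conv)
          then show ?thesis using sc irr by simp
        next
          assume "length cs = 2"
          then obtain a b where "cs = [a, b]"
            by (metis One_nat_def Suc_1 length_0_conv length_Suc_conv)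
          then show ?thesis unfolding xs_eq using sc anti[of a b] by simp
        qed
      next
        case ge3: True
        show ?thesis
        proof (cases "chordless R cs")
          case True
          then show ?thesis unfolding xs_eq using H[OF dist ge3 sc True] by simp
        next
          case False
          define m where "m = length cs"
          obtain i0 j0 where ij0: "i0 < m" "j0 < m" "R (cs!i0) (cs!j0)"
            "j0 \<noteq> (i0 + 1) mod m" "i0 \<noteq> (j0 + 1) mod m"
            using False unfolding chordless_def m_def by blast
          have "i0 \<noteq> j0" using ij0 irr by blast
          then obtain i j where ij: "i < j" "j < m" "R (cs!i) (cs!j)"
            "j \<noteq> (i + 1) mod m" "i \<noteq> (j + 1) mod m"
          proof (cases "i0 < j0")
            case True then show ?thesis using that ij0 by blast
          next
            case False
            then have "j0 < i0" using \<open>i0 \<noteq> j0\<close> by simp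
            moreover have "R (cs!j0) (cs!i0)" using sym[OF ij0(3)] .
            ultimately show ?thesis using that[of j0 i0] ij0 by simp
          qed
          have ji: "j \<noteq> Suc i" using ij by auto
          have ne: "\<not> (i = 0 \<and> j = m - 1)"
          proof
            assume "i = 0 \<and> j = m - 1"
            then have "(j + 1) mod m = 0" using ij by simp
            then show False using ij \<open>i = 0 \<and> j = m - 1\<close> by simp
          qed
          obtain p q r where pqr: "cs = p @ [cs!i] @ q @ [cs!j] @ r" "length p = i"
            "length q = j - Suc i"
            using split2[of i j cs] ij m_def by blast
          define u where "u = cs!i"
          define v where "v = cs!j"
          have pqr1: "cs = p @ [u] @ q @ [v] @ r" using pqr(1) unfolding u_def v_def .
          have Ruv: "R u v" using ij(3) unfolding u_def v_def .
          have lr: "length r = m - Suc j" 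
          proof -
            have "length cs = length p + length q + length r + 2" using pqr1 by simp
            then show ?thesis using pqr(2,3) ij unfolding m_def by linarith
          qed
          define W1 where "W1 = u # q @ [v, u]"
          define W2 where "W2 = p @ [u, v] @ r @ [?h]"
          have xs2: "xs = p @ u # q @ v # r @ [?h]" using xs_eq pqr1 by simp
          have lxs: "length xs = Suc m" using xs_eq m_def by simp
          have sx: "successively R (p @ u # q @ v # r @ [?h])" using less.prems xs2 by simp
          have a1: "successively R (u # q @ [v])"
            using succ_prefix[of R "u # q @ [v]" "r @ [?h]"] succ_suffix[of R p] sx by simp
          have s1: "successively R W1" unfolding W1_def
            using succ_join[of R "u # q" v "[u]"] a1 sym[OF Ruv] by simp
          have a2: "successively R (p @ [u])" using succ_prefix[of R "p @ [u]"] sx by simp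
          have a3: "successively R (v # r @ [?h])" using succ_suffix[of R "p @ u # q"] sx by simp
          have "successively R (u # v # r @ [?h])" using a3 Ruv by simp
          then have s2: "successively R W2" unfolding W2_def using succ_join[OF a2] by simp
          have hW2: "hd W2 = last W2"
          proof (cases p)
            case Nil
            then have "hd cs = u" using pqr1 by simp
            then show ?thesis using Nil unfolding W2_def by simp
          next
            case (Cons a p')
            then have "hd cs = a" using pqr1 by simp
            then show ?thesis using Cons unfolding W2_def by simp
          qed
          have l1: "length W1 = length q + 3" unfolding W1_def by simp
          have l2: "length W2 = length p + length r + 3" unfolding W2_def by simp
          have "N dvd wsum w W1"
            by (rule less.hyps) (use s1 l1 pqr(3) lxs ij ne in \<open>auto simp: W1_def\<close>)
          moreover have "N dvd wsum w W2"
            by (rule less.hyps) (use s2 hW2 l2 pqr(2) lr lxs ij ji in \<open>auto simp: W2_def\<close>)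
          moreover have "wsum w xs = wsum w W1 + wsum w W2"
          proof -
            have "wsum w xs = wsum w (p @ [u]) + wsum w (u # q @ v # r @ [?h])"
              using xs2 wsum_append[of w p u "q @ v # r @ [?h]"] by simp
            moreover have "wsum w (u # q @ v # r @ [?h]) = wsum w (u # q @ [v]) + wsum w (v # r @ [?h])"
              using wsum_append[of w "u # q" v "r @ [?h]"] by simp
            moreover have "wsum w W1 = wsum w (u # q @ [v]) + w v u"
              unfolding W1_def using wsum_append[of w "u # q" v "[u]"] by simp
            moreover have "wsum w W2 = wsum w (p @ [u]) + w u v + wsum w (v # r @ [?h])"
              unfolding W2_def using wsum_append[of w p u "v # r @ [?h]"] by simp
            ultimately show ?thesis using anti[OF Ruv] by simp
          qed
          ultimately show ?thesis by simp
        qed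
      qed
    qed
  qed
qed


lemma wsum_Cons_ne: "xs \<noteq> [] \<Longrightarrow> wsum w (a # xs) = w a (hd xs) + wsum w xs"
  by (cases xs) auto

lemma potential:
  assumes sym: "\<And>a b. R a b \<Longrightarrow> R b a"
    and anti: "\<And>a b. R a b \<Longrightarrow> w b a = - w a b"
    and CW: "\<And>xs. successively R xs \<Longrightarrow> xs \<noteq> [] \<Longrightarrow> hd xs = last xs \<Longrightarrow> N dvd wsum w xs"
  shows "\<exists>y. \<forall>a b. R a b \<longrightarrow> N dvd (y a - y b - w a b)"
proof -
  define reach where "reach u x \<longleftrightarrow> (\<exists>xs. successively R xs \<and> xs \<noteq> [] \<and> hd xs = u \<and> last xs = x)" for u x
  define root where "root u = (SOME r. reach u r)" for u
  define P where "P u = (SOME xs. successively R xs \<and> xs \<noteq> [] \<and> hd xs = u \<and> last xs = root u)" for u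
  define y where "y u = wsum w (P u)" for u
  have rr: "reach u u" for u unfolding reach_def by (intro exI[of _ "[u]"]) simp
  have rroot: "reach u (root u)" for u unfolding root_def using rr by (rule someI)
  have Pp: "successively R (P u) \<and> P u \<noteq> [] \<and> hd (P u) = u \<and> last (P u) = root u" for u
    unfolding P_def using rroot[of u] unfolding reach_def by (rule someI_ex)
  have pre: "reach a x" if h: "R a b" "reach b x" for a b x
  proof -
    obtain xs where xs: "successively R xs" "xs \<noteq> []" "hd xs = b" "last xs = x"
      using h(2) unfolding reach_def by blast
    then have "successively R (a # xs)" using h(1) by (cases xs) auto
    then show ?thesis unfolding reach_def using xs by (intro exI[of _ "a # xs"]) auto
  qed
  have sameroot: "root a = root b" if "R a b" for a b
  proof -
    have "(\<lambda>r. reach a r) = (\<lambda>r. reach b r)"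
      using pre[OF that] pre[OF sym[OF that]] by blast
    then show ?thesis unfolding root_def by simp
  qed
  have "N dvd (y a - y b - w a b)" if ab: "R a b" for a b
  proof -
    define r where "r = root a"
    have rb: "root b = r" using sameroot[OF ab] r_def by simp
    define pb where "pb = butlast (P b)"
    define pa where "pa = tl (rev (P a))"
    have Pb: "P b = pb @ [r]" using Pp[of b] rb unfolding pb_def by (metis append_butlast_last_id)
    have Pa: "rev (P a) = r # pa" using Pp[of a] r_def unfolding pa_def
      by (metis hd_rev list.collapse rev_is_Nil_conv)
    have s1: "successively R (a # pb @ [r])"
    proof -
      have "successively R (a # P b)" using Pp[of b] ab by (cases "P b") auto
      then show ?thesis using Pb by simp
    qed
    have s2: "successively R (r # pa)"
    proof -
      have "successively (\<lambda>x y. R y x) (P a)" using Pp[of a]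
        by (auto intro: successively_mono sym)
      then have "successively R (rev (P a))" by simp
      then show ?thesis using Pa by simp
    qed
    define Z where "Z = a # pb @ r # pa"
    have sZ: "successively R Z" unfolding Z_def using succ_join[of R "a # pb" r pa] s1 s2 by simp
    have lZ: "last Z = a"
    proof -
      have "last Z = last (r # pa)" unfolding Z_def by simp
      also have "\<dots> = last (rev (P a))" using Pa by simp
      also have "\<dots> = a" using Pp[of a] by (simp add: last_rev)
      finally show ?thesis .
    qed
    have "N dvd wsum w Z" by (rule CW) (use sZ lZ in \<open>auto simp: Z_def\<close>)
    moreover have "wsum w Z = wsum w (a # pb @ [r]) + wsum w (r # pa)"
      unfolding Z_def using wsum_append[of w "a # pb" r pa] by simp
    moreover have "wsum w (a # pb @ [r]) = w a b + y b"
    proof -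
      have "wsum w (a # P b) = w a b + wsum w (P b)" using wsum_Cons_ne[of "P b" w a] Pp[of b] by simp
      then show ?thesis unfolding y_def Pb by simp
    qed
    moreover have "wsum w (r # pa) = - y a"
    proof -
      have "wsum w (rev (P a)) = - wsum w (P a)" using wsum_rev[of R w "P a"] anti Pp[of a] by blast
      then show ?thesis using Pa unfolding y_def by simp
    qed
    ultimately have "N dvd (w a b + y b - y a)" by simp
    then have "N dvd - (w a b + y b - y a)" by (simp only: dvd_minus_iff)
    then show ?thesis by (simp add: algebra_simps)
  qed
  then show ?thesis by blast
qed


lemma Ln_elim:
  assumes "f \<in> Ln n" "n \<ge> 1"
  shows "f x = nat ((int (f 0) - int x) mod int n)"
proof -
  obtain i where i: "i < n" "f = Lperm n i" using assms(1) unfolding Ln_def by blast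
  then have "f 0 = i" unfolding Lperm_def by simp
  then show ?thesis using i unfolding Lperm_def by simp
qed

theorem theorem9:
  fixes V :: "'a set" and E :: "('a \<times> 'a) set"
    and K :: "'a \<times> 'a \<Rightarrow> nat \<Rightarrow> nat" and n :: nat
  assumes "n \<ge> 1"
    and "oriented_simple_graph V E"
    and "bipartite V E"
    and "\<forall>e \<in> E. K e \<in> Ln n"
  shows "\<not> has_consistent V E K n \<longleftrightarrow>
    (\<exists>cs. chordless_cycle V E cs \<and>
          \<not> has_consistent (set cs) (cycle_edges E cs) K n)"
proof
  assume "\<exists>cs. chordless_cycle V E cs \<and> \<not> has_consistent (set cs) (cycle_edges E cs) K n"
  then obtain cs where cs: "chordless_cycle V E cs" "\<not> has_consistent (set cs) (cycle_edges E cs) K n"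
    by blast
  show "\<not> has_consistent V E K n"
  proof
    assume "has_consistent V E K n"
    then obtain k where k: "consistent V E K n k" unfolding has_consistent_def by blast
    have "consistent (set cs) (cycle_edges E cs) K n k"
      using k cs(1) unfolding consistent_def chordless_cycle_def cycle_edges_def by blast
    then show False using cs(2) unfolding has_consistent_def by blast
  qed
next
  assume ncons: "\<not> has_consistent V E K n"
  show "\<exists>cs. chordless_cycle V E cs \<and> \<not> has_consistent (set cs) (cycle_edges E cs) K n"
  proof (rule ccontr)
    assume "\<not> ?thesis"
    then have allc: "\<And>cs. chordless_cycle V E cs \<Longrightarrow> has_consistent (set cs) (cycle_edges E cs) K n"
      by blast
    obtain A where A: "A \<subseteq> V" "\<forall>(u, v) \<in> E. (u \<in> A \<longleftrightarrow> v \<notin> A)"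
      using assms(3) unfolding bipartite_def by blast
    have EV: "E \<subseteq> V \<times> V" and noloop: "\<And>u v. (u, v) \<in> E \<Longrightarrow> u \<noteq> v \<and> (v, u) \<notin> E"
      using assms(2) unfolding oriented_simple_graph_def by blast+
    define R where "R = adj E"
    define sg :: "'a \<Rightarrow> int" where "sg u = (if u \<in> A then 1 else -1)" for u
    define c :: "'a \<Rightarrow> 'a \<Rightarrow> int" where
      "c u v = (if (u, v) \<in> E then int (K (u, v) 0) else int (K (v, u) 0))" for u v
    define w where "w u v = sg u * c u v" for u v
    define N where "N = int n"
    have Npos: "N > 0" using assms(1) N_def by simp
    have sgsq: "sg u * sg u = 1" for u unfolding sg_def by simp
    have sgE: "sg v = - sg u" if "(u, v) \<in> E" for u v
      using A(2) that unfolding sg_def by auto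
    have sym: "R a b \<Longrightarrow> R b a" for a b unfolding R_def adj_def by blast
    have irr: "\<not> R a a" for a unfolding R_def adj_def using noloop by blast
    have cE: "c v u = c u v" if "(u, v) \<in> E" for u v
      using noloop[OF that] that unfolding c_def by auto
    have anti: "w b a = - w a b" if "R a b" for a b
    proof (cases "(a, b) \<in> E")
      case True then show ?thesis unfolding w_def using sgE[OF True] cE[OF True] by simp
    next
      case False
      then have ba: "(b, a) \<in> E" using that unfolding R_def adj_def by blast
      then show ?thesis unfolding w_def using sgE[OF ba] cE[OF ba] by simp
    qed
    have Kform: "K e x = nat ((int (K e 0) - int x) mod int n)" if "e \<in> E" for e x
      using Ln_elim[of "K e" n x] assms(1,4) that by blast
    have cval: "c u v = int (K (u, v) 0)" if "(u, v) \<in> E" for u v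
      using that unfolding c_def by simp
    have edge_pot: "N dvd (sg a * int (k a) - sg b * int (k b) - w a b)"
      if e: "(u, v) \<in> E" and ku: "k u < n" and kv: "K (u, v) (k u) = k v"
        and ab: "{a, b} = {u, v}" for u v k a b
    proof -
      have kvn: "k v = nat ((int (K (u, v) 0) - int (k u)) mod int n)"
        using kv Kform[OF e, of "k u"] by simp
      have "(int (K (u, v) 0) - int (k u)) mod int n \<ge> 0" using Npos N_def by simp
      then have "int (k v) = (int (K (u, v) 0) - int (k u)) mod N"
        unfolding kvn N_def by simp
      then have "N dvd (int (k v) - (int (K (u, v) 0) - int (k u)))"
        by (metis mod_mod_trivial mod_eq_dvd_iff)
      then have d: "N dvd (sg u * int (k u) - sg v * int (k v) - w u v)"
      proof -
        have "N dvd sg u * (int (k u) + int (k v) - int (K (u, v) 0))"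
          using dvd_mult[OF \<open>N dvd (int (k v) - (int (K (u, v) 0) - int (k u)))\<close>, of "sg u"]
          by (simp add: algebra_simps)
        then show ?thesis unfolding w_def cval[OF e] sgE[OF e] by (simp add: algebra_simps)
      qed
      have "R u v" unfolding R_def adj_def using e by simp
      then have wvu: "w v u = - w u v" using anti by blast
      show ?thesis
      proof (cases "a = u")
        case True
        then have "b = v" using ab noloop[OF e] by (auto simp: doubleton_eq_iff)
        then show ?thesis using d True by simp
      next
        case False
        then have "a = v" "b = u" using ab by (auto simp: doubleton_eq_iff)
        then show ?thesis using d wvu dvd_minus_iff[of N "sg u * int (k u) - sg v * int (k v) - w u v"]
          by (simp add: algebra_simps)
      qed
    qed
    have H: "N dvd wsum w (cs @ [hd cs])"
      if d: "distinct cs" and l3: "length cs \<ge> 3" and sc: "successively R (cs @ [hd cs])"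
        and cl: "chordless R cs" for cs
    proof -
      define m where "m = length cs"
      define cs' where "cs' = cs @ [hd cs]"
      have nth1: "cs' ! i = cs ! i" if "i < m" for i using that unfolding cs'_def m_def by (simp add: nth_append)
      have nth2: "cs' ! Suc i = cs ! ((i + 1) mod m)" if "i < m" for i
      proof (cases "Suc i < m")
        case True then show ?thesis unfolding cs'_def m_def by (simp add: nth_append)
      next
        case False
        then have "Suc i = m" using that by simp
        then show ?thesis unfolding cs'_def m_def using l3 by (cases cs) (auto simp: nth_append)
      qed
      have cons: "R (cs ! i) (cs ! ((i + 1) mod m))" if "i < m" for i
        using successively_nth[OF sc[folded cs'_def], of i] nth1[OF that] nth2[OF that] that
        unfolding cs'_def m_def by simp
      have sub: "set cs \<subseteq> V"
      proof
        fix x assume "x \<in> set cs"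
        then obtain i where i: "i < m" "x = cs ! i" unfolding m_def by (metis in_set_conv_nth)
        have "R x (cs ! ((i + 1) mod m))" using cons[OF i(1)] i(2) by simp
        then show "x \<in> V" using EV unfolding R_def adj_def by blast
      qed
      have "chordless_cycle V E cs"
        unfolding chordless_cycle_def using l3 d sub cons cl
        unfolding chordless_def R_def m_def by blast
      then obtain k where k: "consistent (set cs) (cycle_edges E cs) K n k"
        using allc unfolding has_consistent_def by blast
      define yk where "yk x = sg x * int (k x)" for x
      have "successively (\<lambda>a b. N dvd (yk a - yk b - w a b)) cs'"
        unfolding successively_conv_nth
      proof (intro allI impI)
        fix i assume "Suc i < length cs'"
        then have im: "i < m" unfolding cs'_def m_def by simp
        define a where "a = cs ! i"
        define b where "b = cs ! ((i + 1) mod m)"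
        have ab: "cs' ! i = a" "cs' ! Suc i = b" using nth1[OF im] nth2[OF im] a_def b_def by auto
        have am: "a \<in> set cs" "b \<in> set cs" using im l3 unfolding a_def b_def m_def by (auto intro!: nth_mem mod_less_divisor)
        have Rab: "R a b" using cons[OF im] a_def b_def by simp
        then obtain u v where uv: "(u, v) \<in> E" "{a, b} = {u, v}"
          unfolding R_def adj_def by blast
        have "(u, v) \<in> cycle_edges E cs"
          unfolding cycle_edges_def using uv im unfolding a_def b_def m_def by auto
        then have kv: "K (u, v) (k u) = k v" using k unfolding consistent_def by blast
        have "u \<in> set cs" using uv am by (auto simp: doubleton_eq_iff)
        then have ku: "k u < n" using k unfolding consistent_def by blast
        show "N dvd (yk (cs' ! i) - yk (cs' ! Suc i) - w (cs' ! i) (cs' ! Suc i))"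
          unfolding ab yk_def using edge_pot[OF uv(1) ku kv uv(2)] .
      qed
      from telescope[OF this] have "N dvd (wsum w cs' - (yk (hd cs') - yk (last cs')))"
        unfolding cs'_def by simp
      moreover have "hd cs' = last cs'" unfolding cs'_def using l3 by (cases cs) auto
      ultimately show ?thesis unfolding cs'_def by simp
    qed
    have CW: "N dvd wsum w xs" if "successively R xs" "xs \<noteq> []" "hd xs = last xs" for xs
      using closed_walk_dvd[of R w N xs] sym irr anti H that by blast
    obtain y where y: "\<And>a b. R a b \<Longrightarrow> N dvd (y a - y b - w a b)"
      using potential[of R w N] sym anti CW by blast
    define k where "k x = nat ((sg x * y x) mod N)" for x
    have kint: "int (k x) = (sg x * y x) mod N" for x unfolding k_def using Npos by simp
    have "consistent V E K n k"
      unfolding consistent_def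
    proof (intro conjI ballI)
      fix x assume "x \<in> V"
      show "k x < n" using kint[of x] Npos N_def
        by (metis of_nat_less_iff pos_mod_bound)
    next
      fix e assume e: "e \<in> E"
      obtain u v where uv: "e = (u, v)" by (cases e)
      have euv: "(u, v) \<in> E" using e uv by simp
      have Ruv: "R u v" unfolding R_def adj_def using euv by simp
      define i where "i = int (K (u, v) 0)"
      have dy: "N dvd (y u - y v - sg u * i)" using y[OF Ruv] unfolding w_def cval[OF euv] i_def .
      have ku: "int (k u) = sg u * y u - N * ((sg u * y u) div N)"
        using kint[of u] by (simp add: minus_div_mult_eq_mod[symmetric] algebra_simps)
      have eq: "i - int (k u) - sg v * y v = - sg u * (y u - y v - sg u * i) + N * ((sg u * y u) div N)"
        unfolding ku sgE[OF euv] using sgsq[of u] by (simp add: algebra_simps)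
      have "N dvd (i - int (k u) - sg v * y v)"
        unfolding eq using dy by simp
      then have m: "(i - int (k u)) mod N = (sg v * y v) mod N"
        by (simp add: mod_eq_dvd_iff)
      have "K (u, v) (k u) = nat ((i - int (k u)) mod N)"
        using Kform[OF euv, of "k u"] unfolding i_def N_def .
      also have "\<dots> = k v" using m unfolding k_def[of v] by simp
      finally show "case e of (a, b) \<Rightarrow> K (a, b) (k a) = k b" using uv by simp
    qed
    then show False using ncons unfolding has_consistent_def by blast
  qed
qed

end
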